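(* Every finite monoid is sofic.
   Context: For a non-empty finite set $X$, $\mathrm{Map}(X)$ is the monoid of all maps $X\to X$ under composition (identity $\mathrm{Id}_X$) with the Hamming metric $d_X(f,g)=|\{x\in X : f(x)\ne g(x)\}|/|X|$. For a monoid $M$ with identity $1_M$, finite $K\subset M$ and $\varepsilon,\alpha>0$, a map $\varphi\colon M\to\mathrm{Map}(X)$ is a $(K,\varepsilon)$-morphism if $d_X(\varphi(k_1k_2),\varphi(k_1)\varphi(k_2))\le\varepsilon$ for all $k_1,k_2\in K$ and $d_X(\varphi(1_M),\mathrm{Id}_X)\le\varepsilon$; it is $(K,\alpha)$-injective if $d_X(\varphi(k_1),\varphi(k_2))\ge\alpha$ for all distinct $k_1,k_2\in K$. $M$ is sofic if for every finite $K\subset M$ and every $\varepsilon>0$ there exist a non-empty finite set $X$ and a $(K,1-\varepsilon)$-injective $(K,\varepsilon)$-morphism $\varphi\colon M\to\mathrm{Map}(X)$. *)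

theory Defs
  imports Complex_Main
begin

text \<open>Maps of a finite set X into itself are represented as functions nat => nat
  that send X into X; only their values on X matter (Hamming distance only looks at X).\<close>

definition is_map_on :: "nat set \<Rightarrow> (nat \<Rightarrow> nat) \<Rightarrow> bool" where
  "is_map_on X f \<longleftrightarrow> f ` X \<subseteq> X"

definition hamming :: "nat set \<Rightarrow> (nat \<Rightarrow> nat) \<Rightarrow> (nat \<Rightarrow> nat) \<Rightarrow> real" where
  "hamming X f g = real (card {x \<in> X. f x \<noteq> g x}) / real (card X)"

definition is_K_eps_morphism ::
    "'m::monoid_mult set \<Rightarrow> real \<Rightarrow> nat set \<Rightarrow> ('m \<Rightarrow> nat \<Rightarrow> nat) \<Rightarrow> bool" where
  "is_K_eps_morphism K \<epsilon> X \<phi> \<longleftrightarrow>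
     (\<forall>m. is_map_on X (\<phi> m)) \<and>
     (\<forall>k1\<in>K. \<forall>k2\<in>K. hamming X (\<phi> (k1 * k2)) (\<phi> k1 \<circ> \<phi> k2) \<le> \<epsilon>) \<and>
     hamming X (\<phi> 1) id \<le> \<epsilon>"

definition is_K_alpha_injective ::
    "'m set \<Rightarrow> real \<Rightarrow> nat set \<Rightarrow> ('m \<Rightarrow> nat \<Rightarrow> nat) \<Rightarrow> bool" where
  "is_K_alpha_injective K \<alpha> X \<phi> \<longleftrightarrow>
     (\<forall>k1\<in>K. \<forall>k2\<in>K. k1 \<noteq> k2 \<longrightarrow> hamming X (\<phi> k1) (\<phi> k2) \<ge> \<alpha>)"

definition sofic_monoid :: "'m::monoid_mult itself \<Rightarrow> bool" where
  "sofic_monoid _ \<longleftrightarrow>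
     (\<forall>(K::'m set) (\<epsilon>::real). finite K \<and> \<epsilon> > 0 \<longrightarrow>
        (\<exists>(X::nat set) (\<phi>::'m \<Rightarrow> nat \<Rightarrow> nat).
           finite X \<and> X \<noteq> {} \<and>
           is_K_alpha_injective K (1 - \<epsilon>) X \<phi> \<and> is_K_eps_morphism K \<epsilon> X \<phi>))"

end

theory Submission
  imports Defs "HOL-Library.FuncSet"
begin

locale enc =
  fixes T :: "'a set" and g :: "'a \<Rightarrow> nat"
  assumes fin: "finite T" and bij: "bij_betw g T {0..<card T}"
begin

definition X where "X = {0..<card T}"
definition Phi :: "('a \<Rightarrow> 'a) \<Rightarrow> nat \<Rightarrow> nat" where
  "Phi F x = (if x \<in> X then g (F (inv_into T g x)) else x)"

lemma inv_in: "x \<in> X \<Longrightarrow> inv_into T g x \<in> T"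
  using bij unfolding X_def by (metis bij_betw_def inv_into_into)

lemma g_inv: "x \<in> X \<Longrightarrow> g (inv_into T g x) = x"
  using bij unfolding X_def by (meson bij_betw_inv_into_right)

lemma inv_g: "t \<in> T \<Longrightarrow> inv_into T g (g t) = t"
  using bij by (meson bij_betw_inv_into_left)

lemma g_in: "t \<in> T \<Longrightarrow> g t \<in> X"
  using bij unfolding X_def by (meson bij_betwE)

lemma Phi_map: "F ` T \<subseteq> T \<Longrightarrow> is_map_on X (Phi F)"
  unfolding is_map_on_def Phi_def using inv_in g_in by auto

lemma Phi_comp: "G ` T \<subseteq> T \<Longrightarrow> x \<in> X \<Longrightarrow> (Phi F \<circ> Phi G) x = Phi (F \<circ> G) x"
proof -
  assume a: "G ` T \<subseteq> T" "x \<in> X"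
  then have "G (inv_into T g x) \<in> T" using inv_in by blast
  then show ?thesis unfolding Phi_def using a g_in inv_g by auto
qed

lemma Phi_id: "x \<in> X \<Longrightarrow> Phi id x = id x"
  unfolding Phi_def using g_inv by auto

lemma card_eq: "card {x \<in> X. Phi F x \<noteq> Phi G x} = card {t \<in> T. F t \<noteq> G t}"
  if "F ` T \<subseteq> T" "G ` T \<subseteq> T"
proof -
  have inj: "inj_on g T" using bij bij_betw_def by blast
  have "{x \<in> X. Phi F x \<noteq> Phi G x} = g ` {t \<in> T. F t \<noteq> G t}"
  proof safe
    fix x assume x: "x \<in> X" "Phi F x \<noteq> Phi G x"
    then show "x \<in> g ` {t \<in> T. F t \<noteq> G t}"
      using inv_in g_inv unfolding Phi_def
      by (intro image_eqI[of _ _ "inv_into T g x"]) auto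
  next
    fix t assume t: "t \<in> T" "F t \<noteq> G t"
    then show "g t \<in> X" using g_in by auto
    assume "Phi F (g t) = Phi G (g t)"
    then have "g (F t) = g (G t)" using t g_in inv_g unfolding Phi_def by auto
    then show False using t that inj by (meson image_subset_iff inj_onD)
  qed
  then show ?thesis using inj by (simp add: card_image inj_on_subset)
qed

lemma ham: "F ` T \<subseteq> T \<Longrightarrow> G ` T \<subseteq> T \<Longrightarrow>
   hamming X (Phi F) (Phi G) = real (card {t \<in> T. F t \<noteq> G t}) / real (card T)"
  unfolding hamming_def using card_eq by (simp add: X_def)

lemma ham_cong: "(\<And>x. x \<in> X \<Longrightarrow> f x = f' x) \<Longrightarrow> hamming X f g' = hamming X f' g'"
  unfolding hamming_def by (metis (mono_tags, lifting) Collect_cong)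

lemma ham_cong2: "(\<And>x. x \<in> X \<Longrightarrow> f x = f' x) \<Longrightarrow> hamming X g' f = hamming X g' f'"
  unfolding hamming_def by (metis (mono_tags, lifting) Collect_cong)

end

lemma transfer:
  fixes act :: "'m::monoid_mult \<Rightarrow> 'a \<Rightarrow> 'a"
  assumes fin: "finite T" and ne: "T \<noteq> {}" and pres: "\<And>m. act m ` T \<subseteq> T"
    and mult: "\<And>a b t. t \<in> T \<Longrightarrow> act (a * b) t = act a (act b t)"
    and one: "\<And>t. t \<in> T \<Longrightarrow> act 1 t = t"
    and sep: "\<And>a b. a \<in> K \<Longrightarrow> b \<in> K \<Longrightarrow> a \<noteq> b \<Longrightarrow>
         real (card {t \<in> T. act a t = act b t}) \<le> \<epsilon> * real (card T)"
    and eps: "\<epsilon> > 0"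
  shows "\<exists>(X::nat set) (\<phi>::'m \<Rightarrow> nat \<Rightarrow> nat).
           finite X \<and> X \<noteq> {} \<and>
           is_K_alpha_injective K (1 - \<epsilon>) X \<phi> \<and> is_K_eps_morphism K \<epsilon> X \<phi>"
proof -
  obtain g where g: "bij_betw g T {0..<card T}"
    using ex_bij_betw_finite_nat[OF fin] by blast
  interpret enc T g using fin g by unfold_locales
  define \<phi> where "\<phi> m = Phi (act m)" for m
  have cT: "card T > 0" using fin ne by (simp add: card_gt_0_iff)
  have "finite X" "X \<noteq> {}" unfolding X_def using cT by auto
  moreover have "is_K_alpha_injective K (1 - \<epsilon>) X \<phi>"
    unfolding is_K_alpha_injective_def
  proof (intro ballI impI)
    fix a b assume ab: "a \<in> K" "b \<in> K" "a \<noteq> b"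
    have split: "card {t \<in> T. act a t \<noteq> act b t} + card {t \<in> T. act a t = act b t} = card T"
    proof -
      have "{t \<in> T. act a t \<noteq> act b t} \<union> {t \<in> T. act a t = act b t} = T" by auto
      moreover have "card ({t \<in> T. act a t \<noteq> act b t} \<union> {t \<in> T. act a t = act b t})
         = card {t \<in> T. act a t \<noteq> act b t} + card {t \<in> T. act a t = act b t}"
        by (rule card_Un_disjoint) (use fin in auto)
      ultimately show ?thesis by simp
    qed
    have "hamming X (\<phi> a) (\<phi> b) = real (card {t \<in> T. act a t \<noteq> act b t}) / real (card T)"
      unfolding \<phi>_def using ham pres by blast
    also have "\<dots> = (real (card T) - real (card {t \<in> T. act a t = act b t})) / real (card T)"
    proof -
      have "real (card T) = real (card {t \<in> T. act a t \<noteq> act b t}) + real (card {t \<in> T. act a t = act b t})"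
        by (metis split of_nat_add)
      then show ?thesis by simp
    qed
    also have "\<dots> \<ge> 1 - \<epsilon>"
      using sep[OF ab] cT by (simp add: field_simps)
    finally show "hamming X (\<phi> a) (\<phi> b) \<ge> 1 - \<epsilon>" .
  qed
  moreover have "is_K_eps_morphism K \<epsilon> X \<phi>"
    unfolding is_K_eps_morphism_def
  proof (intro conjI ballI allI)
    fix m show "is_map_on X (\<phi> m)" unfolding \<phi>_def using Phi_map pres by blast
  next
    fix a b
    have "hamming X (\<phi> (a * b)) (\<phi> a \<circ> \<phi> b) = hamming X (\<phi> (a * b)) (Phi (act a \<circ> act b))"
      unfolding \<phi>_def by (rule ham_cong2) (use Phi_comp pres in blast)
    also have "\<dots> = 0"
    proof -
      have E: "{t \<in> T. act (a * b) t \<noteq> act a (act b t)} = {}" using mult by auto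
      have "hamming X (Phi (act (a * b))) (Phi (act a \<circ> act b)) =
        real (card {t \<in> T. act (a * b) t \<noteq> (act a \<circ> act b) t}) / real (card T)"
        by (rule ham) (use pres in \<open>auto simp: image_subset_iff\<close>)
      also have "\<dots> = 0" by (simp only: comp_apply E card.empty)
      finally show ?thesis unfolding \<phi>_def .
    qed
    finally show "hamming X (\<phi> (a * b)) (\<phi> a \<circ> \<phi> b) \<le> \<epsilon>" using eps by simp
  next
    have "hamming X (\<phi> 1) id = hamming X (\<phi> 1) (Phi id)"
      by (rule ham_cong2) (use Phi_id in auto)
    also have "\<dots> = 0"
    proof -
      have E: "{t \<in> T. act 1 t \<noteq> id t} = {}" using one by auto
      have "hamming X (Phi (act 1)) (Phi id) = real (card {t \<in> T. act 1 t \<noteq> id t}) / real (card T)"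
        by (rule ham) (use pres in auto)
      also have "\<dots> = 0" by (simp only: E card.empty)
      finally show ?thesis unfolding \<phi>_def .
    qed
    finally show "hamming X (\<phi> 1) id \<le> \<epsilon>" using eps by simp
  qed
  ultimately show ?thesis by blast
qed


theorem proposition4p1:
  shows "sofic_monoid TYPE('m::{monoid_mult, finite})"
  unfolding sofic_monoid_def
proof (intro allI impI, elim conjE)
  fix K :: "'m set" and \<epsilon> :: real
  assume "finite K" and eps: "\<epsilon> > 0"
  define c where "c = card (UNIV :: 'm set)"
  have c0: "c > 0" unfolding c_def by (simp add: card_gt_0_iff)
  have "((real c - 1) / real c) < 1" using c0 by simp
  then obtain n where n: "((real c - 1) / real c) ^ n < \<epsilon>"
    using real_arch_pow_inv[OF eps] by blast
  define T where "T = PiE {..<n} (\<lambda>_. (UNIV :: 'm set))"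
  define act where "act m f = restrict (\<lambda>i. m * f i) {..<n}" for m :: 'm and f :: "nat \<Rightarrow> 'm"
  have finT: "finite T" unfolding T_def by (simp add: finite_PiE)
  have cardT: "card T = c ^ n" unfolding T_def c_def by (simp add: card_PiE)
  have "card T > 0" using cardT c0 by simp
  then have neT: "T \<noteq> {}" by auto
  have pres: "act m ` T \<subseteq> T" for m
  proof
    fix g assume "g \<in> act m ` T"
    then obtain t where "g = act m t" by blast
    then show "g \<in> T" unfolding T_def act_def by (simp only: restrict_PiE_iff) simp
  qed
  have mult: "act (a * b) t = act a (act b t)" if "t \<in> T" for a b t
    unfolding act_def by (rule ext) (simp add: restrict_def mult.assoc)
  have one: "act 1 t = t" if "t \<in> T" for t
  proof (rule ext)
    fix i
    show "act 1 t i = t i"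
    proof (cases "i < n")
      case True then show ?thesis unfolding act_def by simp
    next
      case False
      have "t \<in> extensional {..<n}" using that unfolding T_def by (simp only: PiE_iff)
      then have "t i = undefined" using False by (intro extensional_arb) auto
      then show ?thesis unfolding act_def using False by simp
    qed
  qed
  have sep: "real (card {t \<in> T. act a t = act b t}) \<le> \<epsilon> * real (card T)"
    if ab: "a \<noteq> b" for a b
  proof -
    define A where "A = {x. a * x = b * x}"
    have eq: "{t \<in> T. act a t = act b t} = PiE {..<n} (\<lambda>_. A)"
    proof (rule set_eqI, rule iffI)
      fix t assume "t \<in> {t \<in> T. act a t = act b t}"
      then have t: "t \<in> T" "act a t = act b t" by auto
      have 1: "t i \<in> A" if i: "i \<in> {..<n}" for i
      proof -
        have "act a t i = act b t i" using t by simp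
        then show "t i \<in> A" using i unfolding act_def A_def by simp
      qed
      have 2: "t i = undefined" if "i \<notin> {..<n}" for i
        using t that unfolding T_def by (meson PiE_iff extensional_arb)
      show "t \<in> PiE {..<n} (\<lambda>_. A)" using 1 2 by (rule PiE_I)
    next
      fix t assume t: "t \<in> PiE {..<n} (\<lambda>_. A)"
      have "t \<in> T" using t unfolding T_def by (simp add: PiE_iff)
      moreover have "act a t = act b t" unfolding act_def
        using t by (intro ext) (simp add: A_def restrict_def PiE_iff)
      ultimately show "t \<in> {t \<in> T. act a t = act b t}" by simp
    qed
    have "1 \<notin> A" using ab unfolding A_def by simp
    then have "A \<subseteq> UNIV - {1}" by auto
    then have "card A \<le> card (UNIV - {1::'m})" by (intro card_mono) auto
    also have "card (UNIV - {1::'m}) = c - 1" unfolding c_def by (simp add: card_Diff_singleton)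
    finally have cA: "card A \<le> c - 1" .
    have "real (card {t \<in> T. act a t = act b t}) = real (card A) ^ n"
      unfolding eq by (simp add: card_PiE)
    also have "\<dots> \<le> (real c - 1) ^ n"
      using cA c0 by (intro power_mono) (auto simp: of_nat_diff)
    also have "\<dots> = ((real c - 1) / real c) ^ n * real c ^ n"
      using c0 by (simp add: power_divide)
    also have "\<dots> \<le> \<epsilon> * real c ^ n"
      using n c0 by (intro mult_right_mono) auto
    also have "\<dots> = \<epsilon> * real (card T)" by (simp add: cardT)
    finally show ?thesis .
  qed
  show "\<exists>(X::nat set) (\<phi>::'m \<Rightarrow> nat \<Rightarrow> nat).
           finite X \<and> X \<noteq> {} \<and>
           is_K_alpha_injective K (1 - \<epsilon>) X \<phi> \<and> is_K_eps_morphism K \<epsilon> X \<phi>"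
    by (rule transfer[OF finT neT pres mult one sep eps])
qed

end
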